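(* Let $\mu$ be a Radon measure on $\mathbb{R}^N$ with $\mu\ll\mathcal H^{N-1}$, let $E$ be a bounded set of finite perimeter, $u_k=\chi_E*\rho_{1/k}$ and $A_{k;1/2}=\{y:u_k(y)>\frac12\}$. Then for every $\varepsilon>0$ there exists $k^*=k^*(\varepsilon)$ such that for $k\ge k^*$, $$\|\mu\|(E^1\setminus A_{k;1/2})<\varepsilon\quad\text{and}\quad\|\mu\|(A_{k;1/2}\setminus E)<\varepsilon.$$
   Context: $D(E,y)=\lim_{r\to0}|E\cap B(y,r)|/|B(y,r)|$, $E^\alpha=\{D(E,\cdot)=\alpha\}$, $\partial^mE=\mathbb{R}^N\setminus(E^0\cup E^1)$; the representative $E=E^1\cup\partial^mE$ is used. $\rho$ is a nonnegative symmetric $C_c^\infty$ mollifier supported in the unit ball with integral 1, $\rho_\varepsilon(y)=\varepsilon^{-N}\rho(y/\varepsilon)$. $\|\mu\|$ is the total variation of $\mu$. *)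

theory Defs
  imports "HOL-Analysis.Analysis"
begin

definition density_ratio :: "'a::euclidean_space set \<Rightarrow> 'a \<Rightarrow> real \<Rightarrow> real" where
  "density_ratio E y r = measure lebesgue (E \<inter> ball y r) / measure lebesgue (ball y r)"

definition density_pts :: "'a::euclidean_space set \<Rightarrow> real \<Rightarrow> 'a set" where
  "density_pts E \<alpha> = {y. (density_ratio E y \<longlongrightarrow> \<alpha>) (at_right 0)}"

definition meas_boundary :: "'a::euclidean_space set \<Rightarrow> 'a set" where
  "meas_boundary E = UNIV - (density_pts E 0 \<union> density_pts E 1)"

definition omega_const :: "real \<Rightarrow> real" where
  "omega_const s = pi powr (s / 2) / Gamma (s / 2 + 1)"

text \<open>contribution of one covering set: omega_s (diam C / 2)^s, with 0^0 = 1 for nonempty C\<close>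
definition haus_term :: "real \<Rightarrow> 'a::euclidean_space set \<Rightarrow> real" where
  "haus_term s C = (if C = {} then 0 else if s = 0 then 1
                    else omega_const s * (diameter C / 2) powr s)"

definition hausdorff_pre :: "real \<Rightarrow> real \<Rightarrow> 'a::euclidean_space set \<Rightarrow> ennreal" where
  "hausdorff_pre s \<delta> A =
     (INF C \<in> {C :: nat \<Rightarrow> 'a set. A \<subseteq> (\<Union>i. C i) \<and> (\<forall>i. bounded (C i) \<and> diameter (C i) \<le> \<delta>)}.
        (\<Sum>i. ennreal (haus_term s (C i))))"

definition hausdorff_measure :: "real \<Rightarrow> 'a::euclidean_space set \<Rightarrow> ennreal" where
  "hausdorff_measure s A = (SUP \<delta> \<in> {0<..}. hausdorff_pre s \<delta> A)"

definition divergence :: "('a::euclidean_space \<Rightarrow> 'a) \<Rightarrow> 'a \<Rightarrow> real" where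
  "divergence \<phi> x = (\<Sum>b\<in>Basis. frechet_derivative \<phi> (at x) b \<bullet> b)"

definition perimeter_test :: "('a::euclidean_space \<Rightarrow> 'a) \<Rightarrow> bool" where
  "perimeter_test \<phi> \<longleftrightarrow>
     (\<forall>x. \<phi> differentiable at x) \<and>
     (\<forall>b\<in>Basis. continuous_on UNIV (\<lambda>x. frechet_derivative \<phi> (at x) b)) \<and>
     (\<exists>R. \<forall>x. norm x > R \<longrightarrow> \<phi> x = 0) \<and>
     (\<forall>x. norm (\<phi> x) \<le> 1)"

definition finite_perimeter :: "'a::euclidean_space set \<Rightarrow> bool" where
  "finite_perimeter E \<longleftrightarrow> E \<in> sets lebesgue \<and>
     (\<exists>C. \<forall>\<phi>. perimeter_test \<phi> \<longrightarrow> (LINT x:E|lebesgue. divergence \<phi> x) \<le> C)"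

coinductive smooth_fun :: "('a::euclidean_space \<Rightarrow> real) \<Rightarrow> bool" where
  "(\<forall>x. f differentiable at x) \<Longrightarrow>
   (\<forall>b\<in>Basis. smooth_fun (\<lambda>x. frechet_derivative f (at x) b)) \<Longrightarrow> smooth_fun f"

definition mollifier :: "('a::euclidean_space \<Rightarrow> real) \<Rightarrow> bool" where
  "mollifier \<rho> \<longleftrightarrow> smooth_fun \<rho> \<and> (\<forall>x. \<rho> x \<ge> 0) \<and> (\<forall>x. \<rho> (- x) = \<rho> x) \<and>
     (\<forall>x. x \<notin> cball 0 1 \<longrightarrow> \<rho> x = 0) \<and>
     integrable lebesgue \<rho> \<and> integral\<^sup>L lebesgue \<rho> = 1"

definition mollifier_scaled :: "('a::euclidean_space \<Rightarrow> real) \<Rightarrow> real \<Rightarrow> 'a \<Rightarrow> real" where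
  "mollifier_scaled \<rho> \<epsilon> y = (1 / \<epsilon>) ^ DIM('a) * \<rho> ((1 / \<epsilon>) *\<^sub>R y)"

definition mollify_set :: "('a::euclidean_space \<Rightarrow> real) \<Rightarrow> real \<Rightarrow> 'a set \<Rightarrow> 'a \<Rightarrow> real" where
  "mollify_set \<rho> \<epsilon> E y = (LINT x:E|lebesgue. mollifier_scaled \<rho> \<epsilon> (y - x))"

definition radon_measure :: "'a::euclidean_space measure \<Rightarrow> bool" where
  "radon_measure M \<longleftrightarrow> sets M = sets borel \<and> (\<forall>K. compact K \<longrightarrow> emeasure M K < \<infinity>)"

text \<open>A signed Radon measure mu = muP - muN with muP, muN Radon and mutually singular;
  its total variation is ||mu|| = muP + muN.\<close>
definition signed_radon :: "'a::euclidean_space measure \<Rightarrow> 'a measure \<Rightarrow> bool" where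
  "signed_radon \<mu>P \<mu>N \<longleftrightarrow> radon_measure \<mu>P \<and> radon_measure \<mu>N \<and>
     (\<exists>S \<in> sets borel. emeasure \<mu>P (UNIV - S) = 0 \<and> emeasure \<mu>N S = 0)"

definition total_variation :: "'a::euclidean_space measure \<Rightarrow> 'a measure \<Rightarrow> 'a set \<Rightarrow> ennreal" where
  "total_variation \<mu>P \<mu>N A = emeasure \<mu>P A + emeasure \<mu>N A"

definition abs_cont_hausdorff :: "'a::euclidean_space measure \<Rightarrow> 'a measure \<Rightarrow> bool" where
  "abs_cont_hausdorff \<mu>P \<mu>N \<longleftrightarrow>
     (\<forall>B \<in> sets borel. hausdorff_measure (real DIM('a) - 1) B = 0 \<longrightarrow> total_variation \<mu>P \<mu>N B = 0)"

end

theory Submission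
  imports Defs
begin


lemma moll_cont:
  assumes "mollifier \<rho>" shows "continuous_on UNIV \<rho>"
proof -
  have "smooth_fun \<rho>" using assms by (simp add: mollifier_def)
  then have "\<forall>x. \<rho> differentiable at x" by (cases) auto
  then show ?thesis by (simp add: continuous_at_imp_continuous_on differentiable_imp_continuous_within)
qed

lemma moll_bounded:
  assumes "mollifier \<rho>" obtains M where "M > 0" "\<And>x. \<rho> x \<le> M"
proof -
  have "compact (\<rho> ` cball 0 1)"
    using moll_cont[OF assms] by (intro compact_continuous_image) (auto intro: continuous_on_subset)
  then obtain B where B: "\<And>z. z \<in> \<rho> ` cball 0 1 \<Longrightarrow> norm z \<le> B"
    by (meson compact_imp_bounded bounded_iff)
  show ?thesis
  proof (rule that[of "max B 1"])
    fix x show "\<rho> x \<le> max B 1"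
    proof (cases "x \<in> cball 0 1")
      case True then show ?thesis using B[of "\<rho> x"] by auto
    next
      case False then show ?thesis using assms by (simp add: mollifier_def)
    qed
  qed simp
qed

lemma moll_borel: "mollifier \<rho> \<Longrightarrow> \<rho> \<in> borel_measurable borel"
  using moll_cont borel_measurable_continuous_onI by blast

lemma moll_nn1:
  assumes "mollifier \<rho>" shows "(\<integral>\<^sup>+x. ennreal (\<rho> x) \<partial>lborel) = 1"
proof -
  have m: "\<rho> \<in> borel_measurable borel" using moll_borel[OF assms] .
  have i: "integrable lebesgue \<rho>" "integral\<^sup>L lebesgue \<rho> = 1" "\<And>x. \<rho> x \<ge> 0" using assms by (auto simp: mollifier_def)
  have "(\<integral>\<^sup>+x. ennreal (\<rho> x) \<partial>lebesgue) = ennreal (integral\<^sup>L lebesgue \<rho>)"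
    using i by (intro nn_integral_eq_integral) auto
  moreover have "(\<integral>\<^sup>+x. ennreal (\<rho> x) \<partial>lebesgue) = (\<integral>\<^sup>+x. ennreal (\<rho> x) \<partial>lborel)"
    using m by (simp add: nn_integral_completion)
  ultimately show ?thesis using i by simp
qed

lemma moll_scaled_nn1:
  assumes "mollifier \<rho>" "\<epsilon> > 0"
  shows "(\<integral>\<^sup>+x. ennreal (mollifier_scaled \<rho> \<epsilon> (y - x)) \<partial>lborel) = 1"
proof -
  define c where "c = - (1/\<epsilon>)"
  define t where "t = (1/\<epsilon>) *\<^sub>R y"
  have c: "c \<noteq> 0" using assms by (simp add: c_def)
  have m: "\<rho> \<in> borel_measurable borel" using moll_borel[OF assms(1)] .
  have "1 = (\<integral>\<^sup>+x. ennreal (\<rho> x) \<partial>lborel)" using moll_nn1[OF assms(1)] by simp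
  also have "\<dots> = (\<integral>\<^sup>+x. ennreal (\<rho> x) \<partial>density (distr lborel borel (\<lambda>x. t + c *\<^sub>R x)) (\<lambda>_. \<bar>c\<bar>^DIM('a)))"
    using lborel_affine[OF c, of t] by simp
  also have "\<dots> = (\<integral>\<^sup>+x. \<bar>c\<bar>^DIM('a) * ennreal (\<rho> x) \<partial>distr lborel borel (\<lambda>x. t + c *\<^sub>R x))"
    using m by (subst nn_integral_density) auto
  also have "\<dots> = (\<integral>\<^sup>+x. \<bar>c\<bar>^DIM('a) * ennreal (\<rho> (t + c *\<^sub>R x)) \<partial>lborel)"
    using m by (subst nn_integral_distr) auto
  also have "\<dots> = (\<integral>\<^sup>+x. ennreal (mollifier_scaled \<rho> \<epsilon> (y - x)) \<partial>lborel)"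
  proof (rule nn_integral_cong)
    fix x :: 'a
    have "t + c *\<^sub>R x = (1/\<epsilon>) *\<^sub>R (y - x)" by (simp add: t_def c_def algebra_simps)
    moreover have "\<bar>c\<bar> = 1/\<epsilon>" using assms by (simp add: c_def)
    ultimately show "ennreal (\<bar>c\<bar>^DIM('a)) * ennreal (\<rho> (t + c *\<^sub>R x)) = ennreal (mollifier_scaled \<rho> \<epsilon> (y - x))"
      using assms by (simp add: mollifier_scaled_def ennreal_mult'' mollifier_def)
  qed
  finally show ?thesis by simp
qed



lemma sigma_finite_lebesgue: "sigma_finite_measure (lebesgue :: 'a::euclidean_space measure)"
proof -
  obtain A :: "'a set set" where A: "countable A" "A \<subseteq> sets lborel" "\<Union>A = space lborel" "\<forall>a\<in>A. emeasure lborel a \<noteq> \<infinity>"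
    using lborel.sigma_finite_countable by blast
  show ?thesis
    unfolding sigma_finite_measure_def
    by (rule exI[of _ A]) (use A in \<open>auto simp: emeasure_completion\<close>)
qed

lemma snd_lebesgue_borel: "snd \<in> measurable (borel \<Otimes>\<^sub>M lebesgue) (borel :: 'a::euclidean_space measure)"
proof -
  have "(\<lambda>x::'a. x) \<in> measurable lebesgue borel" by (rule measurable_completion) simp
  then show ?thesis using measurable_snd by (rule measurable_compose[rotated])
qed

lemma param_meas:
  fixes g :: "'a::euclidean_space \<Rightarrow> real"
  assumes g: "g \<in> borel_measurable borel" and E: "E \<in> sets lebesgue"
  shows "(\<lambda>y. \<integral>x. indicator E x * g (y - x) \<partial>lebesgue) \<in> borel_measurable borel"
proof -
  interpret sigma_finite_measure "lebesgue :: 'a measure" by (rule sigma_finite_lebesgue)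
  have s: "snd \<in> measurable (borel \<Otimes>\<^sub>M lebesgue) (borel :: 'a measure)" by (rule snd_lebesgue_borel)
  have f: "fst \<in> measurable (borel \<Otimes>\<^sub>M lebesgue) (borel :: 'a measure)" by simp
  have d: "(\<lambda>p. fst p - snd p) \<in> borel_measurable (borel \<Otimes>\<^sub>M (lebesgue :: 'a measure))"
    using f s by (intro borel_measurable_diff) auto
  have gd: "(\<lambda>p. g (fst p - snd p)) \<in> borel_measurable (borel \<Otimes>\<^sub>M (lebesgue :: 'a measure))"
    using measurable_compose[OF d g] by (simp add: o_def)
  have ie: "(\<lambda>p. indicator E (snd p) :: real) \<in> borel_measurable (borel \<Otimes>\<^sub>M (lebesgue :: 'a measure))"
    by (rule measurable_compose[OF measurable_snd]) (rule borel_measurable_indicator[OF E])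
  have "(\<lambda>(y, x). indicator E x * g (y - x)) \<in> borel_measurable (borel \<Otimes>\<^sub>M (lebesgue :: 'a measure))"
    using borel_measurable_times[OF ie gd] by (simp add: case_prod_beta)
  then show ?thesis by (rule borel_measurable_lebesgue_integral)
qed


lemma ms_cont: assumes a: "mollifier \<rho>" shows "continuous_on UNIV (mollifier_scaled \<rho> \<epsilon>)"
proof -
  have l: "continuous_on UNIV (\<lambda>y::'a. (1/\<epsilon>) *\<^sub>R y)"
    by (rule continuous_on_scaleR[OF continuous_on_const continuous_on_id])
  have "continuous_on UNIV (\<lambda>y::'a. \<rho> ((1/\<epsilon>) *\<^sub>R y))"
    by (rule continuous_on_compose2[OF moll_cont[OF a] l]) auto
  then show ?thesis unfolding mollifier_scaled_def by (rule continuous_on_mult_left)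
qed

lemma ms_borel: "mollifier \<rho> \<Longrightarrow> mollifier_scaled \<rho> \<epsilon> \<in> borel_measurable borel"
  using ms_cont borel_measurable_continuous_onI by blast

lemma ms_int:
  assumes "mollifier \<rho>" "\<epsilon> > 0"
  shows "integrable lebesgue (\<lambda>x. mollifier_scaled \<rho> \<epsilon> (y - x))"
    "integral\<^sup>L lebesgue (\<lambda>x. mollifier_scaled \<rho> \<epsilon> (y - x)) = 1"
proof -
  have c: "continuous_on UNIV (\<lambda>x. mollifier_scaled \<rho> \<epsilon> (y - x))"
    by (rule continuous_on_compose2[OF ms_cont[OF assms(1)] continuous_on_diff[OF continuous_on_const continuous_on_id]]) auto
  have mb: "(\<lambda>x. mollifier_scaled \<rho> \<epsilon> (y - x)) \<in> borel_measurable borel"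
    using c borel_measurable_continuous_onI by blast
  have ml: "(\<lambda>x. mollifier_scaled \<rho> \<epsilon> (y - x)) \<in> borel_measurable lebesgue"
    by (rule measurable_completion) (use mb in simp)
  have nn: "\<And>x. 0 \<le> mollifier_scaled \<rho> \<epsilon> (y - x)"
    using assms by (simp add: mollifier_scaled_def mollifier_def)
  have "(\<integral>\<^sup>+x. ennreal (mollifier_scaled \<rho> \<epsilon> (y - x)) \<partial>lebesgue) = (\<integral>\<^sup>+x. ennreal (mollifier_scaled \<rho> \<epsilon> (y - x)) \<partial>lborel)"
    using mb by (intro nn_integral_completion)
  also have "\<dots> = ennreal 1" using moll_scaled_nn1[OF assms, of y] by simp
  finally have h: "has_bochner_integral lebesgue (\<lambda>x. mollifier_scaled \<rho> \<epsilon> (y - x)) 1"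
    using ml nn by (intro has_bochner_integral_nn_integral) auto
  show "integrable lebesgue (\<lambda>x. mollifier_scaled \<rho> \<epsilon> (y - x))"
    using h by (simp add: has_bochner_integral_iff)
  show "integral\<^sup>L lebesgue (\<lambda>x. mollifier_scaled \<rho> \<epsilon> (y - x)) = 1"
    using h by (simp add: has_bochner_integral_iff)
qed

lemma ms_bound:
  assumes "mollifier \<rho>" "\<epsilon> > 0" "\<And>x. \<rho> x \<le> M"
  shows "mollifier_scaled \<rho> \<epsilon> ((y::'a::euclidean_space) - x) \<le> (1/\<epsilon>)^DIM('a) * M * indicator (ball y (2*\<epsilon>)) x"
proof (cases "x \<in> ball y (2*\<epsilon>)")
  case True
  have "(1/\<epsilon>)^DIM('a) * \<rho> ((1/\<epsilon>) *\<^sub>R (y - x)) \<le> (1/\<epsilon>)^DIM('a) * M"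
    using assms(2,3) by (intro mult_left_mono) auto
  then show ?thesis using True unfolding mollifier_scaled_def by simp
next
  case False
  then have h: "norm (y - x) \<ge> 2*\<epsilon>" by (simp add: dist_norm)
  have "norm ((1/\<epsilon>) *\<^sub>R (y - x)) = norm (y - x) / \<epsilon>" using assms(2) by simp
  also have "\<dots> \<ge> 2" using h assms(2) by (simp add: le_divide_eq)
  finally have "(1/\<epsilon>) *\<^sub>R ((y::'a) - x) \<notin> cball 0 1" by simp
  then have "\<rho> ((1/\<epsilon>) *\<^sub>R ((y::'a) - x)) = 0" using assms(1) unfolding mollifier_def by blast
  then show ?thesis using False by (simp add: mollifier_scaled_def)
qed

lemma ball_fin: "emeasure lebesgue (ball (y::'a::euclidean_space) r) < \<infinity>"
  using lmeasurable_ball[of y r] by (simp add: fmeasurable_def)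

lemma est_a:
  assumes "mollifier \<rho>" "\<epsilon> > 0" "\<And>x. \<rho> x \<le> M" "E \<in> sets lebesgue"
  shows "mollify_set \<rho> \<epsilon> E y \<le> (1/\<epsilon>)^DIM('a) * M * measure lebesgue (E \<inter> ball (y::'a::euclidean_space) (2*\<epsilon>))"
proof -
  have fin: "emeasure lebesgue (E \<inter> ball y (2*\<epsilon>)) < \<infinity>"
    using ball_fin[of y "2*\<epsilon>"] emeasure_mono[of "E \<inter> ball y (2*\<epsilon>)" "ball y (2*\<epsilon>)" lebesgue]
    by (auto simp: le_less_trans)
  have "mollify_set \<rho> \<epsilon> E y = (\<integral>x. indicator E x * mollifier_scaled \<rho> \<epsilon> (y - x) \<partial>lebesgue)"
    by (simp add: mollify_set_def set_lebesgue_integral_def)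
  also have "\<dots> \<le> (\<integral>x. (1/\<epsilon>)^DIM('a) * M * indicator (E \<inter> ball y (2*\<epsilon>)) x \<partial>lebesgue)"
  proof (rule integral_mono)
    show "integrable lebesgue (\<lambda>x. indicator E x * mollifier_scaled \<rho> \<epsilon> (y - x))"
      using integrable_mult_indicator[OF assms(4) ms_int(1)[OF assms(1,2)]] by simp
    show "integrable lebesgue (\<lambda>x. (1/\<epsilon>)^DIM('a) * M * indicator (E \<inter> ball y (2*\<epsilon>)) x :: real)"
      using fin assms(4) by (intro integrable_mult_right integrable_real_indicator) auto
    fix x show "indicator E x * mollifier_scaled \<rho> \<epsilon> (y - x) \<le> (1/\<epsilon>)^DIM('a) * M * indicator (E \<inter> ball y (2*\<epsilon>)) x"
      using ms_bound[OF assms(1-3), of y x] by (auto simp: indicator_def)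
  qed
  also have "\<dots> = (1/\<epsilon>)^DIM('a) * M * measure lebesgue (E \<inter> ball y (2*\<epsilon>))"
    by simp
  finally show ?thesis .
qed

lemma est_b:
  assumes "mollifier \<rho>" "\<epsilon> > 0" "\<And>x. \<rho> x \<le> M" "E \<in> sets lebesgue"
  shows "1 - mollify_set \<rho> \<epsilon> E y \<le> (1/\<epsilon>)^DIM('a) * M *
     (measure lebesgue (ball (y::'a::euclidean_space) (2*\<epsilon>)) - measure lebesgue (E \<inter> ball y (2*\<epsilon>)))"
proof -
  let ?B = "ball y (2*\<epsilon>)"
  have fin: "emeasure lebesgue (?B - E) < \<infinity>"
    using ball_fin[of y "2*\<epsilon>"] emeasure_mono[of "?B - E" "?B" lebesgue]
    by (auto simp: le_less_trans)
  have i1: "integrable lebesgue (\<lambda>x. mollifier_scaled \<rho> \<epsilon> (y - x))" using ms_int assms by blast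
  have "1 - mollify_set \<rho> \<epsilon> E y = (\<integral>x. mollifier_scaled \<rho> \<epsilon> (y - x) \<partial>lebesgue) - (\<integral>x. indicator E x * mollifier_scaled \<rho> \<epsilon> (y - x) \<partial>lebesgue)"
    using ms_int[OF assms(1,2)] by (simp add: mollify_set_def set_lebesgue_integral_def)
  also have "\<dots> = (\<integral>x. indicator (UNIV - E) x * mollifier_scaled \<rho> \<epsilon> (y - x) \<partial>lebesgue)"
  proof -
    have i2: "integrable lebesgue (\<lambda>x. indicator E x * mollifier_scaled \<rho> \<epsilon> (y - x))"
      using integrable_mult_indicator[OF assms(4) i1] by simp
    show ?thesis
      by (subst Bochner_Integration.integral_diff[OF i1 i2, symmetric]) (auto intro!: Bochner_Integration.integral_cong simp: indicator_def)
  qed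
  also have "\<dots> \<le> (\<integral>x. (1/\<epsilon>)^DIM('a) * M * indicator (?B - E) x \<partial>lebesgue)"
  proof (rule integral_mono)
    show "integrable lebesgue (\<lambda>x. indicator (UNIV - E) x * mollifier_scaled \<rho> \<epsilon> (y - x))"
      using integrable_mult_indicator[OF _ i1, of "UNIV - E"] assms(4) sets.compl_sets[of E lebesgue] by simp
    show "integrable lebesgue (\<lambda>x. (1/\<epsilon>)^DIM('a) * M * indicator (?B - E) x :: real)"
      using fin assms(4) by (intro integrable_mult_right integrable_real_indicator) auto
    fix x show "indicator (UNIV - E) x * mollifier_scaled \<rho> \<epsilon> (y - x) \<le> (1/\<epsilon>)^DIM('a) * M * indicator (?B - E) x"
      using ms_bound[OF assms(1-3), of y x] by (auto simp: indicator_def)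
  qed
  also have "\<dots> = (1/\<epsilon>)^DIM('a) * M * measure lebesgue (?B - E)"
    by simp
  also have "measure lebesgue (?B - E) = measure lebesgue ?B - measure lebesgue (E \<inter> ?B)"
  proof -
    have "?B - E = ?B - (E \<inter> ?B)" by auto
    moreover have "measure lebesgue (?B - (E \<inter> ?B)) = measure lebesgue ?B - measure lebesgue (E \<inter> ?B)"
      using ball_fin[of y "2*\<epsilon>"] assms(4) by (intro measure_Diff) auto
    ultimately show ?thesis by simp
  qed
  finally show ?thesis .
qed

lemma measure_ball_scale:
  assumes "r \<ge> 0"
  shows "measure lebesgue (ball (c::'a::euclidean_space) r) = r ^ DIM('a) * measure lebesgue (ball (0::'a) 1)"
  using content_ball_conv_unit_ball[OF assms, of c] by simp



lemma unit_ball_pos: "measure lebesgue (ball (0::'a::euclidean_space) 1) > 0"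
  using content_ball_pos[of 1 "0::'a"] by simp

lemma key:
  fixes y :: "'a::euclidean_space"
  assumes "mollifier \<rho>" "\<And>x. \<rho> x \<le> M" "E \<in> sets lebesgue" "\<epsilon> > 0"
  shows "mollify_set \<rho> \<epsilon> E y \<le> M * 2^DIM('a) * measure lebesgue (ball (0::'a) 1) * density_ratio E y (2*\<epsilon>)"
    "1 - mollify_set \<rho> \<epsilon> E y \<le> M * 2^DIM('a) * measure lebesgue (ball (0::'a) 1) * (1 - density_ratio E y (2*\<epsilon>))"
proof -
  define V where "V = measure lebesgue (ball (0::'a) 1)"
  define mB where "mB = measure lebesgue (ball y (2*\<epsilon>))"
  define mE where "mE = measure lebesgue (E \<inter> ball y (2*\<epsilon>))"
  have mB: "mB = (2*\<epsilon>)^DIM('a) * V" unfolding mB_def V_def using assms(4) by (intro measure_ball_scale) simp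
  have V: "V > 0" unfolding V_def by (rule unit_ball_pos)
  have mBp: "mB > 0" using mB V assms(4) by simp
  have dr: "density_ratio E y (2*\<epsilon>) = mE / mB" by (simp add: density_ratio_def mE_def mB_def)
  have c: "(1/\<epsilon>)^DIM('a) * mB = 2^DIM('a) * V"
  proof -
    have "(1/\<epsilon>)^DIM('a) * mB = ((1/\<epsilon>) * (2*\<epsilon>))^DIM('a) * V" by (simp only: mB power_mult_distrib mult.assoc)
    also have "(1/\<epsilon>) * (2*\<epsilon>) = 2" using assms(4) by simp
    finally show ?thesis .
  qed
  have e1: "(1/\<epsilon>)^DIM('a) * M * mE = M * 2^DIM('a) * V * (mE / mB)"
  proof -
    have "(1/\<epsilon>)^DIM('a) * M * mE = M * ((1/\<epsilon>)^DIM('a) * mB) * (mE / mB)" using mBp by simp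
    then show ?thesis using c by simp
  qed
  have e2: "(1/\<epsilon>)^DIM('a) * M * (mB - mE) = M * 2^DIM('a) * V * (1 - mE / mB)"
  proof -
    have "(1/\<epsilon>)^DIM('a) * M * (mB - mE) = M * ((1/\<epsilon>)^DIM('a) * mB) * (1 - mE / mB)"
    proof -
      have q: "mB - mE = mB * (1 - mE/mB)" using mBp by (simp add: algebra_simps)
      show ?thesis by (subst q) (simp add: mult_ac)
    qed
    then show ?thesis using c by simp
  qed
  have a: "mollify_set \<rho> \<epsilon> E y \<le> (1/\<epsilon>)^DIM('a) * M * mE"
    unfolding mE_def by (rule est_a[OF assms(1,4,2,3)])
  have b: "1 - mollify_set \<rho> \<epsilon> E y \<le> (1/\<epsilon>)^DIM('a) * M * (mB - mE)"
    unfolding mE_def mB_def by (rule est_b[OF assms(1,4,2,3)])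
  show "mollify_set \<rho> \<epsilon> E y \<le> M * 2^DIM('a) * measure lebesgue (ball (0::'a) 1) * density_ratio E y (2*\<epsilon>)"
    unfolding V_def[symmetric] dr using a unfolding e1 .
  show "1 - mollify_set \<rho> \<epsilon> E y \<le> M * 2^DIM('a) * measure lebesgue (ball (0::'a) 1) * (1 - density_ratio E y (2*\<epsilon>))"
    unfolding V_def[symmetric] dr using b unfolding e2 .
qed

lemma u_meas:
  assumes "mollifier \<rho>" "E \<in> sets lebesgue"
  shows "(\<lambda>y. mollify_set \<rho> \<epsilon> E y) \<in> borel_measurable borel"
  using param_meas[OF ms_borel[OF assms(1)] assms(2), of \<epsilon>]
  by (simp add: mollify_set_def set_lebesgue_integral_def)

lemma dr_meas:
  assumes "E \<in> sets (lebesgue :: 'a::euclidean_space measure)"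
  shows "(\<lambda>y. density_ratio E y r) \<in> borel_measurable borel"
proof -
  have "(\<lambda>y. \<integral>x. indicator E x * (indicator (ball (0::'a) r) (y - x) :: real) \<partial>lebesgue) \<in> borel_measurable borel"
    by (rule param_meas[OF borel_measurable_indicator assms]) simp
  moreover have "\<And>y. (\<integral>x. indicator E x * (indicator (ball (0::'a) r) (y - x) :: real) \<partial>lebesgue) = measure lebesgue (E \<inter> ball y r)"
  proof -
    fix y :: 'a
    have "(\<integral>x. indicator E x * (indicator (ball (0::'a) r) (y - x) :: real) \<partial>lebesgue) = (\<integral>x. indicator (E \<inter> ball y r) x \<partial>lebesgue)"
    proof (rule Bochner_Integration.integral_cong)
      fix x
      have "(y - x \<in> ball (0::'a) r) = (x \<in> ball y r)"
        using dist_commute[of y x] by (simp add: dist_norm)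
      then show "indicator E x * (indicator (ball (0::'a) r) (y - x) :: real) = indicator (E \<inter> ball y r) x"
        by (simp add: indicator_def)
    qed simp
    then show "(\<integral>x. indicator E x * (indicator (ball (0::'a) r) (y - x) :: real) \<partial>lebesgue) = measure lebesgue (E \<inter> ball y r)"
      by simp
  qed
  ultimately have m1: "(\<lambda>y. measure lebesgue (E \<inter> ball y r)) \<in> borel_measurable borel" by simp
  have meq: "\<And>y::'a. measure lebesgue (ball y r) = measure lebesgue (ball (0::'a) r)"
    using measure_translation[of _ "ball (0::'a) r"] by simp
  have "(\<lambda>y. density_ratio E y r) = (\<lambda>y. measure lebesgue (E \<inter> ball y r) / measure lebesgue (ball (0::'a) r))"
  proof
    fix y :: 'a show "density_ratio E y r = measure lebesgue (E \<inter> ball y r) / measure lebesgue (ball (0::'a) r)"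
      using meq[of y] unfolding density_ratio_def by simp
  qed
  then show ?thesis using m1 by simp
qed

lemma vanish:
  fixes S :: "nat \<Rightarrow> 'a::euclidean_space set"
  assumes "radon_measure \<mu>" "\<And>j. S j \<in> sets borel" "\<And>j. S j \<subseteq> cball 0 R" "\<And>y. \<exists>n. \<forall>j\<ge>n. y \<notin> S j"
  shows "(\<lambda>k. emeasure \<mu> (\<Union>j\<in>{k..}. S j)) \<longlonglongrightarrow> 0"
proof -
  have sm: "sets \<mu> = sets borel" using assms(1) by (simp add: radon_measure_def)
  have fc: "emeasure \<mu> (cball 0 R) < \<infinity>" using assms(1) by (simp add: radon_measure_def)
  have "(\<lambda>k. emeasure \<mu> (\<Union>j\<in>{k..}. S j)) \<longlonglongrightarrow> emeasure \<mu> (\<Inter>k. \<Union>j\<in>{k..}. S j)"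
  proof (rule Lim_emeasure_decseq)
    show "range (\<lambda>k. \<Union>j\<in>{k..}. S j) \<subseteq> sets \<mu>" using assms(2) sm by auto
    show "decseq (\<lambda>k. \<Union>j\<in>{k..}. S j)" by (auto simp: decseq_def) (meson atLeast_iff order_trans)
    fix k
    have "emeasure \<mu> (\<Union>j\<in>{k..}. S j) \<le> emeasure \<mu> (cball 0 R)"
      using assms(3) sm by (intro emeasure_mono) auto
    then show "emeasure \<mu> (\<Union>j\<in>{k..}. S j) \<noteq> \<infinity>" using fc by auto
  qed
  moreover have "(\<Inter>k. \<Union>j\<in>{k..}. S j) = {}"
  proof -
    { fix y assume y: "y \<in> (\<Inter>k. \<Union>j\<in>{k..}. S j)"
      obtain n where "\<forall>j\<ge>n. y \<notin> S j" using assms(4) by blast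
      moreover from y have "y \<in> (\<Union>j\<in>{n..}. S j)" by blast
      ultimately have False by auto }
    then show ?thesis by blast
  qed
  ultimately show ?thesis by simp
qed


lemma tv_mono:
  assumes "sets \<mu>P = sets borel" "sets \<mu>N = sets borel" "B \<in> sets borel" "A \<subseteq> B"
  shows "total_variation \<mu>P \<mu>N A \<le> total_variation \<mu>P \<mu>N B"
proof (cases "A \<in> sets borel")
  case True
  then show ?thesis unfolding total_variation_def using assms
    by (intro add_mono emeasure_mono) auto
next
  case False
  then have "emeasure \<mu>P A = 0" "emeasure \<mu>N A = 0" using assms by (auto intro: emeasure_notin_sets)
  then show ?thesis unfolding total_variation_def by simp
qed

lemma vanish2:
  fixes S :: "nat \<Rightarrow> 'a::euclidean_space set"
  assumes "radon_measure \<mu>P" "radon_measure \<mu>N" "\<And>j. S j \<in> sets borel" "\<And>j. S j \<subseteq> cball 0 R"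
    "\<And>y. \<exists>n. \<forall>j\<ge>n. y \<notin> S j" "\<epsilon> > 0"
  shows "\<exists>n. total_variation \<mu>P \<mu>N (\<Union>j\<in>{n..}. S j) < ennreal \<epsilon>"
proof -
  have "(\<lambda>k. emeasure \<mu>P (\<Union>j\<in>{k..}. S j) + emeasure \<mu>N (\<Union>j\<in>{k..}. S j)) \<longlonglongrightarrow> 0 + 0"
    by (intro tendsto_add vanish[OF assms(1,3,4,5)] vanish[OF assms(2,3,4,5)])
  then have "eventually (\<lambda>k. emeasure \<mu>P (\<Union>j\<in>{k..}. S j) + emeasure \<mu>N (\<Union>j\<in>{k..}. S j) < ennreal \<epsilon>) sequentially"
    using assms(6) by (intro order_tendstoD(2)) auto
  then obtain n where "emeasure \<mu>P (\<Union>j\<in>{n..}. S j) + emeasure \<mu>N (\<Union>j\<in>{n..}. S j) < ennreal \<epsilon>"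
    by (auto simp: eventually_sequentially)
  then show ?thesis unfolding total_variation_def by blast
qed

theorem lemma4p5:
  fixes \<mu>P \<mu>N :: "'a::euclidean_space measure"
    and E :: "'a set" and \<rho> :: "'a \<Rightarrow> real"
  assumes "signed_radon \<mu>P \<mu>N"
    and "abs_cont_hausdorff \<mu>P \<mu>N"
    and "bounded E" and "finite_perimeter E"
    and "E = density_pts E 1 \<union> meas_boundary E"
    and "mollifier \<rho>"
  shows "\<forall>\<epsilon>>0. \<exists>k0::nat. \<forall>k\<ge>k0.
           total_variation \<mu>P \<mu>N (density_pts E 1 - {y. mollify_set \<rho> (1 / real k) E y > 1/2}) < ennreal \<epsilon> \<and>
           total_variation \<mu>P \<mu>N ({y. mollify_set \<rho> (1 / real k) E y > 1/2} - E) < ennreal \<epsilon>"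
proof (intro allI impI)
  fix \<epsilon> :: real assume \<epsilon>p: "\<epsilon> > 0"
  have rP: "radon_measure \<mu>P" and rN: "radon_measure \<mu>N" using assms(1) by (auto simp: signed_radon_def)
  have sP: "sets \<mu>P = sets borel" and sN: "sets \<mu>N = sets borel" using rP rN by (auto simp: radon_measure_def)
  have Em: "E \<in> sets lebesgue" using assms(4) by (simp add: finite_perimeter_def)
  obtain R where R: "\<And>x. x \<in> E \<Longrightarrow> norm x \<le> R" using assms(3) bounded_iff by blast
  obtain M where M: "M > 0" "\<And>x. \<rho> x \<le> M" using moll_bounded[OF assms(6)] by blast
  define K where "K = M * 2^DIM('a) * measure lebesgue (ball (0::'a) 1)"
  have Kp: "K > 0" unfolding K_def using M(1) unit_ball_pos[where 'a='a] by simp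
  define u where "u j y = mollify_set \<rho> (1/real(Suc j)) E y" for j y
  define h where "h j y = density_ratio E y (2*(1/real(Suc j)))" for j y
  have ku1: "u j y \<le> K * h j y" for j y
    unfolding u_def h_def K_def by (rule key(1)[OF assms(6) M(2) Em]) simp
  have ku2: "1 - u j y \<le> K * (1 - h j y)" for j y
    unfolding u_def h_def K_def by (rule key(2)[OF assms(6) M(2) Em]) simp
  have um[measurable]: "u j \<in> borel_measurable borel" for j
    unfolding u_def by (rule u_meas[OF assms(6) Em])
  have hm[measurable]: "h j \<in> borel_measurable borel" for j
    unfolding h_def by (rule dr_meas[OF Em])
  define \<delta> where "\<delta> = 1 / (2*K)"
  have \<delta>p: "\<delta> > 0" using Kp by (simp add: \<delta>_def)
  define L1 where "L1 = {y. \<exists>n::nat. \<forall>j\<ge>n. h j y > 1 - \<delta>}"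
  define L0 where "L0 = {y. \<exists>n::nat. \<forall>j\<ge>n. h j y < \<delta>}"
  have L1m: "L1 \<in> sets borel" unfolding L1_def by measurable
  have L0m: "L0 \<in> sets borel" unfolding L0_def by measurable
  define S1 where "S1 j = {y \<in> L1. norm y \<le> R \<and> u j y \<le> 1/2}" for j
  define S0 where "S0 j = {y \<in> L0. norm y \<le> R + 2 \<and> u j y > 1/2}" for j
  have S1m: "S1 j \<in> sets borel" for j unfolding S1_def using L1m by measurable
  have S0m: "S0 j \<in> sets borel" for j unfolding S0_def using L0m by measurable
  have Kd: "K * \<delta> = 1/2" using Kp by (simp add: \<delta>_def)
  have ev1: "\<exists>n. \<forall>j\<ge>n. y \<notin> S1 j" for y
  proof (cases "y \<in> L1")
    case True
    then obtain n where n: "\<forall>j\<ge>n. h j y > 1 - \<delta>" unfolding L1_def by blast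
    { fix j assume "j \<ge> n"
      then have "1 - h j y < \<delta>" using n by auto
      then have "K * (1 - h j y) < K * \<delta>" using Kp by simp
      then have "u j y > 1/2" using ku2[of j y] Kd by linarith }
    then show ?thesis unfolding S1_def by force
  next
    case False then show ?thesis unfolding S1_def by blast
  qed
  have ev0: "\<exists>n. \<forall>j\<ge>n. y \<notin> S0 j" for y
  proof (cases "y \<in> L0")
    case True
    then obtain n where n: "\<forall>j\<ge>n. h j y < \<delta>" unfolding L0_def by blast
    { fix j assume "j \<ge> n"
      then have "K * h j y < K * \<delta>" using n Kp by simp
      then have "u j y \<le> 1/2" using ku1[of j y] Kd by linarith }
    then show ?thesis unfolding S0_def by force
  next
    case False then show ?thesis unfolding S0_def by blast
  qed
  obtain n1 where n1: "total_variation \<mu>P \<mu>N (\<Union>j\<in>{n1..}. S1 j) < ennreal \<epsilon>"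
  proof -
    have c: "S1 j \<subseteq> cball 0 R" for j unfolding S1_def by auto
    show ?thesis using vanish2[OF rP rN S1m c ev1 \<epsilon>p] that by blast
  qed
  obtain n0 where n0: "total_variation \<mu>P \<mu>N (\<Union>j\<in>{n0..}. S0 j) < ennreal \<epsilon>"
  proof -
    have c: "S0 j \<subseteq> cball 0 (R+2)" for j unfolding S0_def by auto
    show ?thesis using vanish2[OF rP rN S0m c ev0 \<epsilon>p] that by blast
  qed
  have T1m: "(\<Union>j\<in>{n1..}. S1 j) \<in> sets borel" using S1m by (intro sets.countable_UN'') auto
  have T0m: "(\<Union>j\<in>{n0..}. S0 j) \<in> sets borel" using S0m by (intro sets.countable_UN'') auto
  have seq: "filterlim (\<lambda>j. 2*(1/real(Suc j))) (at_right 0) sequentially"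
  proof (rule tendsto_imp_filterlim_at_right)
    have "(\<lambda>j. 2 * inverse (real (Suc j))) \<longlonglongrightarrow> 2 * 0"
      by (intro tendsto_mult tendsto_const LIMSEQ_inverse_real_of_nat)
    then show "(\<lambda>j. 2*(1/real(Suc j))) \<longlonglongrightarrow> 0" by (simp add: divide_inverse)
    show "\<forall>\<^sub>F j in sequentially. 2*(1/real(Suc j)) > 0" by simp
  qed
  have hlim: "(\<lambda>j. h j y) \<longlonglongrightarrow> a" if "y \<in> density_pts E a" for y a
  proof -
    have "(density_ratio E y \<longlongrightarrow> a) (at_right 0)" using that by (simp add: density_pts_def)
    from filterlim_compose[OF this seq] show ?thesis by (simp add: h_def o_def)
  qed
  show "\<exists>k0::nat. \<forall>k\<ge>k0.
           total_variation \<mu>P \<mu>N (density_pts E 1 - {y. mollify_set \<rho> (1 / real k) E y > 1/2}) < ennreal \<epsilon> \<and>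
           total_variation \<mu>P \<mu>N ({y. mollify_set \<rho> (1 / real k) E y > 1/2} - E) < ennreal \<epsilon>"
  proof (intro exI allI impI)
    fix k assume k: "Suc (max n1 n0) \<le> k"
    then obtain j where kj: "k = Suc j" and j1: "n1 \<le> j" and j0: "n0 \<le> j"
      by (metis Suc_le_D Suc_le_mono max.bounded_iff)
    have A: "{y. mollify_set \<rho> (1 / real k) E y > 1/2} = {y. u j y > 1/2}"
      by (simp add: u_def kj)
    have sub1: "density_pts E 1 - {y. u j y > 1/2} \<subseteq> (\<Union>j\<in>{n1..}. S1 j)"
    proof
      fix y assume y: "y \<in> density_pts E 1 - {y. u j y > 1/2}"
      then have yE: "y \<in> E" using assms(5) by blast
      have "(\<lambda>j. h j y) \<longlonglongrightarrow> 1" using y hlim by blast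
      then have "eventually (\<lambda>j. h j y > 1 - \<delta>) sequentially" using \<delta>p by (intro order_tendstoD(1)) auto
      then have "y \<in> L1" unfolding L1_def by (auto simp: eventually_sequentially)
      then have "y \<in> S1 j" unfolding S1_def using y R[OF yE] by auto
      then show "y \<in> (\<Union>j\<in>{n1..}. S1 j)" using j1 by auto
    qed
    have sub0: "{y. u j y > 1/2} - E \<subseteq> (\<Union>j\<in>{n0..}. S0 j)"
    proof
      fix y assume y: "y \<in> {y. u j y > 1/2} - E"
      then have "y \<in> density_pts E 0" using assms(5) unfolding meas_boundary_def by blast
      then have "(\<lambda>j. h j y) \<longlonglongrightarrow> 0" using hlim by blast
      then have "eventually (\<lambda>j. h j y < \<delta>) sequentially" using \<delta>p by (intro order_tendstoD(2)) auto
      then have yL: "y \<in> L0" unfolding L0_def by (auto simp: eventually_sequentially)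
      have "norm y \<le> R + 2"
      proof (rule ccontr)
        assume ny: "\<not> norm y \<le> R + 2"
        have "E \<inter> ball y (2*(1/real(Suc j))) = {}"
        proof (rule ccontr)
          assume "E \<inter> ball y (2*(1/real(Suc j))) \<noteq> {}"
          then obtain x where x: "x \<in> E" "dist y x < 2*(1/real(Suc j))" by auto
          have "2*(1/real(Suc j)) \<le> 2" by (simp add: field_simps)
          moreover have "norm y \<le> norm x + dist y x" by (metis dist_norm norm_triangle_sub add.commute norm_minus_commute)
          ultimately show False using x R[OF x(1)] ny by linarith
        qed
        then have "h j y = 0" by (simp add: h_def density_ratio_def)
        then show False using ku1[of j y] y by simp
      qed
      then have "y \<in> S0 j" unfolding S0_def using y yL by auto
      then show "y \<in> (\<Union>j\<in>{n0..}. S0 j)" using j0 by auto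
    qed
    show "total_variation \<mu>P \<mu>N (density_pts E 1 - {y. mollify_set \<rho> (1 / real k) E y > 1/2}) < ennreal \<epsilon> \<and>
           total_variation \<mu>P \<mu>N ({y. mollify_set \<rho> (1 / real k) E y > 1/2} - E) < ennreal \<epsilon>"
      unfolding A using tv_mono[OF sP sN T1m sub1] tv_mono[OF sP sN T0m sub0] n1 n0
      by (meson le_less_trans)
  qed
qed

end
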